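(* For every reverse semistandard Young tableau $V$, the right row-filling algorithm $\psi(V)$ is a well-defined element of $\mathrm{qKT}^{(1)}$, and $\psi:\mathrm{revSSYT}\to\mathrm{qKT}^{(1)}$ is a bijection with inverse $\phi$. Both maps preserve column sets.
   Context: $\mathrm{revSSYT}$ is the set of reverse semistandard Young tableaux of all partition shapes (English notation; positive integer entries; rows weakly decreasing left to right, columns strictly decreasing top to bottom). The $c$th column set of a tableau or filling is the set of entries in its $c$th column. For a weak composition $a$, $D(a)$ has $a_i$ left-justified boxes in row $i$, row 1 lowest. A quasi-key tableau of shape $a$ is a filling of $D(a)$ with positive integers such that (1) entries weakly decrease along rows and no entry of row $i$ exceeds $i$; (2) entries in each column are distinct and increase going up the first column; (3) if an entry $i$ is above an entry $k$ in the same column with $i<k$, there is an entry $j$ immediately right of $k$ with $i<j$; (4) for two rows with the higher row strictly longer, if $i$ is in column $c$ of the lower row and $j$ in column $c+1$ of the higher row, then $i<j$. $\mathrm{qKT}^{(1)}$ is the set of all quasi-key tableaux (of all shapes $a$) whose first-column entries equal their row indices. $\phi(T)$ for $T\in\mathrm{qKT}^{(1)}$: the top-justified tableau whose $c$th column consists of the entries of column $c$ of $T$ sorted decreasingly from top to bottom. Right row-filling $\psi(V)$: let $C_1,C_2,\ldots$ be the column sets of $V$. Repeat until all are empty: let $k$ be the largest index with $C_k$ nonempty; choose the smallest element $y_k$ of $C_k$; for $c=k-1,\ldots,1$ choose the smallest element $y_c$ of $C_c$ with $y_c\ge y_{c+1}$; make $(y_1,\ldots,y_k)$ (left to right) the row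 of index $y_1$ of the output filling; delete $y_1,\ldots,y_k$ from their column sets. The output is a filling of a skyline diagram. *)

theory Defs
  imports Main
begin

text \<open>A tableau is a list of rows, top row first (English notation); row and
column indices are 0-based here (row r of the list is the (r+1)-st row from
the top, entry r!c is in column c+1). Rows are nonempty, so each partition
shape (including the empty one) has a unique representation.\<close>

type_synonym tableau = "nat list list"

definition revSSYT :: "tableau set" where
  "revSSYT = {V.
     (\<forall>row \<in> set V. row \<noteq> []) \<and>
     (\<forall>i j. i \<le> j \<and> j < length V \<longrightarrow> length (V!j) \<le> length (V!i)) \<and>
     (\<forall>row \<in> set V. \<forall>x \<in> set row. 0 < x) \<and>
     (\<forall>row \<in> set V. sorted_wrt (\<ge>) row) \<and>
     (\<forall>i j c. i < j \<and> j < length V \<and> c < length (V!j) \<longrightarrow> V!j!c < V!i!c)}"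

definition tab_width :: "tableau \<Rightarrow> nat" where
  "tab_width V = foldr max (map length V) 0"

definition tab_colset :: "tableau \<Rightarrow> nat \<Rightarrow> nat set" where
  "tab_colset V c = {V!r!c | r. r < length V \<and> c < length (V!r)}"

text \<open>A filling of D(a) for a weak composition a: row i (1-based, row 1 lowest)
is the list F i, read left to right; a_i = length (F i). Row index 0 is unused
and all but finitely many rows are empty (trailing zero parts of a are
immaterial).\<close>

type_synonym filling = "nat \<Rightarrow> nat list"

definition is_filling :: "filling \<Rightarrow> bool" where
  "is_filling F \<longleftrightarrow> F 0 = [] \<and> finite {i. F i \<noteq> []}"

definition qKT :: "filling set" where
  "qKT = {F. is_filling F \<and>
     (\<forall>i. \<forall>x \<in> set (F i). 0 < x) \<and>
     \<comment> \<open>(1)\<close>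
     (\<forall>i. sorted_wrt (\<ge>) (F i) \<and> (\<forall>x \<in> set (F i). x \<le> i)) \<and>
     \<comment> \<open>(2) distinct entries in columns; first column increases going up\<close>
     (\<forall>r s c. r \<noteq> s \<and> c < length (F r) \<and> c < length (F s) \<longrightarrow> F r ! c \<noteq> F s ! c) \<and>
     (\<forall>r s. s < r \<and> F r \<noteq> [] \<and> F s \<noteq> [] \<longrightarrow> F s ! 0 < F r ! 0) \<and>
     \<comment> \<open>(3) entry i = F r ! c above entry k = F s ! c (s < r), i < k\<close>
     (\<forall>r s c. s < r \<and> c < length (F r) \<and> c < length (F s) \<and> F r ! c < F s ! c \<longrightarrow>
        Suc c < length (F s) \<and> F r ! c < F s ! Suc c) \<and>
     \<comment> \<open>(4) higher row r strictly longer than lower row s\<close>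
     (\<forall>r s c. s < r \<and> length (F s) < length (F r) \<and> c < length (F s) \<and> Suc c < length (F r)
        \<longrightarrow> F s ! c < F r ! Suc c)}"

definition qKT1 :: "filling set" where
  "qKT1 = {F \<in> qKT. \<forall>i. F i \<noteq> [] \<longrightarrow> F i ! 0 = i}"

definition fil_colset :: "filling \<Rightarrow> nat \<Rightarrow> nat set" where
  "fil_colset F c = {F i ! c | i. c < length (F i)}"

definition fil_height :: "filling \<Rightarrow> nat" where
  "fil_height F = (LEAST N. \<forall>i \<ge> N. F i = [])"

definition fil_width :: "filling \<Rightarrow> nat" where
  "fil_width F = foldr max (map (\<lambda>i. length (F i)) [0..<fil_height F]) 0"

definition fil_col :: "filling \<Rightarrow> nat \<Rightarrow> nat list" where
  "fil_col F c = map (\<lambda>i. F i ! c) (filter (\<lambda>i. c < length (F i)) [0..<fil_height F])"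

definition phi_col :: "filling \<Rightarrow> nat \<Rightarrow> nat list" where
  "phi_col F c = rev (sort (fil_col F c))"

text \<open>phi: top-justified tableau whose column c is phi_col F c (top to bottom).\<close>
definition phi :: "filling \<Rightarrow> tableau" where
  "phi F = (let W = fil_width F;
               H = foldr max (map (\<lambda>c. length (phi_col F c)) [0..<W]) 0 in
           map (\<lambda>r. map (\<lambda>c. phi_col F c ! r) (filter (\<lambda>c. r < length (phi_col F c)) [0..<W]))
               [0..<H])"

text \<open>Given column sets C_1..C_(k-1) (as a list) and y_k = b, choose
y_(k-1),...,y_1 right to left: y_c is the smallest element of C_c with
y_c \<ge> y_(c+1). Returns None if some choice is impossible.\<close>
fun chain :: "nat set list \<Rightarrow> nat \<Rightarrow> nat list option" where
  "chain [] b = Some []"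
| "chain (C # Cs) b =
     (case chain Cs b of
        None \<Rightarrow> None
      | Some ys \<Rightarrow>
          (let b' = (case ys of [] \<Rightarrow> b | y # _ \<Rightarrow> y) in
           if {y \<in> C. b' \<le> y} = {} then None
           else Some ((LEAST y. y \<in> C \<and> b' \<le> y) # ys)))"

definition all_empty :: "nat set list \<Rightarrow> bool" where
  "all_empty cs \<longleftrightarrow> (\<forall>C \<in> set cs. C = {})"

definition psi_step :: "nat set list \<Rightarrow> (nat list \<times> nat set list) option" where
  "psi_step cs =
     (let k = Max {i. i < length cs \<and> cs!i \<noteq> {}};
          yk = (LEAST y. y \<in> cs!k) in
      case chain (take k cs) yk of
        None \<Rightarrow> None
      | Some ys \<Rightarrow>
          (let row = ys @ [yk] in
           Some (row, map (\<lambda>i. if i < length row then cs!i - {row!i} else cs!i) [0..<length cs])))"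

fun psi_aux :: "nat \<Rightarrow> nat set list \<Rightarrow> filling option" where
  "psi_aux 0 cs = (if all_empty cs then Some (\<lambda>_. []) else None)"
| "psi_aux (Suc n) cs =
     (if all_empty cs then Some (\<lambda>_. [])
      else case psi_step cs of
             None \<Rightarrow> None
           | Some (row, cs') \<Rightarrow>
               (case psi_aux n cs' of
                  None \<Rightarrow> None
                | Some F \<Rightarrow> Some (F(hd row := row))))"

definition tab_colsets :: "tableau \<Rightarrow> nat set list" where
  "tab_colsets V = map (tab_colset V) [0..<tab_width V]"

text \<open>psi V = None means the algorithm is not well defined on V (some choice
is impossible). The fuel (number of entries) suffices since each step deletes
at least one entry.\<close>
definition psi :: "tableau \<Rightarrow> filling option" where
  "psi V = psi_aux (sum_list (map length V)) (tab_colsets V)"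

end

theory Submission
  imports Defs
begin


lemma chain_eq:
  "length zs = length Cs \<Longrightarrow>
   (\<forall>c<length Cs. zs!c \<in> Cs!c \<and> (if Suc c < length zs then zs!Suc c else b) \<le> zs!c \<and>
      (\<forall>y\<in>Cs!c. (if Suc c < length zs then zs!Suc c else b) \<le> y \<longrightarrow> zs!c \<le> y))
   \<Longrightarrow> chain Cs b = Some zs"
proof (induction Cs arbitrary: zs)
  case Nil then show ?case by simp
next
  case (Cons C Cs)
  then obtain z zs' where zs: "zs = z # zs'" by (cases zs) auto
  have len: "length zs' = length Cs" using Cons.prems zs by simp
  have IHr: "chain Cs b = Some zs'"
  proof (rule Cons.IH[OF len], intro allI impI)
    fix c assume "c < length Cs"
    then show "zs'!c \<in> Cs!c \<and> (if Suc c < length zs' then zs'!Suc c else b) \<le> zs'!c \<and>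
      (\<forall>y\<in>Cs!c. (if Suc c < length zs' then zs'!Suc c else b) \<le> y \<longrightarrow> zs'!c \<le> y)"
      using Cons.prems(2)[rule_format, of "Suc c"] unfolding zs by (cases "Suc c < length zs'") auto
  qed
  define bb where "bb = (if Suc 0 < length zs then zs!Suc 0 else b)"
  have e1: "(case zs' of [] \<Rightarrow> b | y # _ \<Rightarrow> y) = bb"
    using zs unfolding bb_def by (cases zs') auto
  have P0: "z \<in> C \<and> bb \<le> z \<and> (\<forall>y\<in>C. bb \<le> y \<longrightarrow> z \<le> y)"
    using Cons.prems(2)[rule_format, of 0] zs unfolding bb_def by simp
  have ne: "{y \<in> C. bb \<le> y} \<noteq> {}" using P0 by blast
  have L: "(LEAST y. y \<in> C \<and> bb \<le> y) = z"
    using P0 by (intro Least_equality) auto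
  show ?case unfolding zs chain.simps using IHr e1 ne L by (simp add: Let_def)
qed

lemma chain_exists:
  fixes Cs :: "nat set list"
  shows
  "(\<forall>c<length Cs. \<forall>z. z \<in> (if Suc c < length Cs then Cs!Suc c else {b}) \<longrightarrow> (\<exists>y\<in>Cs!c. z \<le> y))
   \<Longrightarrow> \<exists>zs. length zs = length Cs \<and> (\<forall>c<length Cs. zs!c \<in> Cs!c \<and> (if Suc c < length zs then zs!Suc c else b) \<le> zs!c \<and>
      (\<forall>y\<in>Cs!c. (if Suc c < length zs then zs!Suc c else b) \<le> y \<longrightarrow> zs!c \<le> y))"
proof (induction Cs)
  case Nil then show ?case by simp
next
  case (Cons C Cs)
  have "\<forall>c<length Cs. \<forall>z. z \<in> (if Suc c < length Cs then Cs!Suc c else {b}) \<longrightarrow> (\<exists>y\<in>Cs!c. z \<le> y)"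
  proof (intro allI impI)
    fix c z assume "c < length Cs" "z \<in> (if Suc c < length Cs then Cs!Suc c else {b})"
    then show "\<exists>y\<in>Cs!c. z \<le> y" using Cons.prems[rule_format, of "Suc c" z] by (cases "Suc c < length Cs") auto
  qed
  then obtain zs' where zs': "length zs' = length Cs" "\<forall>c<length Cs. zs'!c \<in> Cs!c \<and> (if Suc c < length zs' then zs'!Suc c else b) \<le> zs'!c \<and>
      (\<forall>y\<in>Cs!c. (if Suc c < length zs' then zs'!Suc c else b) \<le> y \<longrightarrow> zs'!c \<le> y)"
    using Cons.IH by blast
  define b' where "b' = (if zs' = [] then b else zs'!0)"
  have "b' \<in> (if Suc 0 < length (C#Cs) then (C#Cs)!Suc 0 else {b})"
    using zs' by (cases Cs) (auto simp: b'_def)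
  then obtain y0 where y0: "y0 \<in> C" "b' \<le> y0" using Cons.prems[rule_format, of 0 b'] by auto
  define z where "z = (LEAST y. y \<in> C \<and> b' \<le> y)"
  have z: "z \<in> C \<and> b' \<le> z" unfolding z_def using y0 by (metis (mono_tags, lifting) LeastI)
  have zmin: "\<forall>y\<in>C. b' \<le> y \<longrightarrow> z \<le> y" unfolding z_def by (auto intro: Least_le)
  show ?case
  proof (rule exI[of _ "z # zs'"], rule conjI)
    show "length (z # zs') = length (C # Cs)" using zs' by simp
    show "\<forall>c<length (C # Cs). (z # zs') ! c \<in> (C # Cs) ! c \<and>
         (if Suc c < length (z # zs') then (z # zs') ! Suc c else b) \<le> (z # zs') ! c \<and>
         (\<forall>y\<in>(C # Cs) ! c. (if Suc c < length (z # zs') then (z # zs') ! Suc c else b) \<le> y \<longrightarrow> (z # zs') ! c \<le> y)"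
    proof (intro allI impI)
    fix c assume c: "c < length (C # Cs)"
    show "(z # zs') ! c \<in> (C # Cs) ! c \<and>
         (if Suc c < length (z # zs') then (z # zs') ! Suc c else b) \<le> (z # zs') ! c \<and>
         (\<forall>y\<in>(C # Cs) ! c. (if Suc c < length (z # zs') then (z # zs') ! Suc c else b) \<le> y \<longrightarrow> (z # zs') ! c \<le> y)"
    proof (cases c)
      case 0 then show ?thesis using z zmin zs'(1) by (cases zs') (auto simp: b'_def)
    next
      case (Suc d) then show ?thesis using zs' c by auto
    qed
    qed
  qed
qed

definition greedy :: "nat set list \<Rightarrow> nat \<Rightarrow> nat list \<Rightarrow> bool" where
  "greedy cs k row \<longleftrightarrow> length row = Suc k \<and> k < length cs \<and> (\<forall>c\<le>k. row!c \<in> cs!c) \<and>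
     (\<forall>y\<in>cs!k. row!k \<le> y) \<and> (\<forall>c<k. row!Suc c \<le> row!c \<and> (\<forall>y\<in>cs!c. row!Suc c \<le> y \<longrightarrow> row!c \<le> y))"

lemma step_ok:
  assumes k: "k = Max {i. i < length cs \<and> cs!i \<noteq> {}}" and g: "greedy cs k row"
  shows "psi_step cs = Some (row, map (\<lambda>i. if i < Suc k then cs!i - {row!i} else cs!i) [0..<length cs])"
proof -
  have len: "length row = Suc k" "k < length cs" using g unfolding greedy_def by auto
  have yk: "(LEAST y. y \<in> cs!k) = row!k"
    using g unfolding greedy_def by (intro Least_equality) auto
  have ch: "chain (take k cs) (row!k) = Some (take k row)"
  proof (rule chain_eq)
    show "length (take k row) = length (take k cs)" using len by simp
    show "\<forall>c<length (take k cs). take k row ! c \<in> take k cs ! c \<and>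
        (if Suc c < length (take k row) then take k row ! Suc c else row ! k) \<le> take k row ! c \<and>
        (\<forall>y\<in>take k cs ! c. (if Suc c < length (take k row) then take k row ! Suc c else row ! k) \<le> y \<longrightarrow> take k row ! c \<le> y)"
    proof (intro allI impI)
      fix c assume c: "c < length (take k cs)"
      then have c': "c < k" by simp
      have e: "(if Suc c < length (take k row) then take k row ! Suc c else row ! k) = row ! Suc c"
        using c' len by (cases "Suc c = k") auto
      show "take k row ! c \<in> take k cs ! c \<and>
        (if Suc c < length (take k row) then take k row ! Suc c else row ! k) \<le> take k row ! c \<and>
        (\<forall>y\<in>take k cs ! c. (if Suc c < length (take k row) then take k row ! Suc c else row ! k) \<le> y \<longrightarrow> take k row ! c \<le> y)"
        unfolding e using c' g unfolding greedy_def by auto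
    qed
  qed
  have rw: "take k row @ [row!k] = row"
    using len by (metis lessI take_Suc_conv_app_nth take_all order_refl)
  show ?thesis unfolding psi_step_def Let_def using k yk ch rw len by simp
qed

lemma greedy_exists:
  assumes "k < length cs" "cs!k \<noteq> {}" "\<forall>c<k. \<forall>z\<in>cs!Suc c. \<exists>y\<in>cs!c. z \<le> y"
  shows "\<exists>row. greedy cs k row"
proof -
  define b where "b = (LEAST y. y \<in> cs!k)"
  have b: "b \<in> cs!k" "\<forall>y\<in>cs!k. b \<le> y" using assms(2) unfolding b_def
    by (auto intro: LeastI Least_le)
  have "\<forall>c<length (take k cs). \<forall>z. z \<in> (if Suc c < length (take k cs) then take k cs!Suc c else {b}) \<longrightarrow> (\<exists>y\<in>take k cs!c. z \<le> y)"
  proof (intro allI impI)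
    fix c z assume c: "c < length (take k cs)" and z: "z \<in> (if Suc c < length (take k cs) then take k cs!Suc c else {b})"
    have ck: "c < k" using c by simp
    have "z \<in> cs!Suc c" using z ck b(1) assms(1) by (cases "Suc c = k") auto
    then show "\<exists>y\<in>take k cs!c. z \<le> y" using assms(3) ck by auto
  qed
  from chain_exists[OF this] obtain zs where zs: "length zs = length (take k cs)"
    "\<forall>c<length (take k cs). zs!c \<in> take k cs!c \<and> (if Suc c < length zs then zs!Suc c else b) \<le> zs!c \<and>
      (\<forall>y\<in>take k cs!c. (if Suc c < length zs then zs!Suc c else b) \<le> y \<longrightarrow> zs!c \<le> y)" by blast
  have lz: "length zs = k" using zs(1) assms(1) by simp
  have "greedy cs k (zs @ [b])"
    unfolding greedy_def
  proof (intro conjI allI impI ballI)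
    show "length (zs @ [b]) = Suc k" using lz by simp
    show "k < length cs" by fact
    fix c assume "c \<le> k"
    then show "(zs @ [b]) ! c \<in> cs ! c" using zs(2)[rule_format, of c] b lz assms(1)
      by (cases "c = k") (auto simp: nth_append)
  next
    fix y assume "y \<in> cs ! k" then show "(zs @ [b]) ! k \<le> y" using b lz by (simp add: nth_append)
  next
    fix c assume c: "c < k"
    have e: "(zs @ [b]) ! Suc c = (if Suc c < length zs then zs!Suc c else b)"
      using c lz by (auto simp: nth_append not_less_eq)
    have e2: "(zs @ [b]) ! c = zs ! c" using c lz by (simp add: nth_append)
    show "(zs @ [b]) ! Suc c \<le> (zs @ [b]) ! c" unfolding e e2 using zs(2)[rule_format, of c] c assms(1) by simp
    fix y assume "y \<in> cs!c" "(zs @ [b]) ! Suc c \<le> y"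
    then show "(zs @ [b]) ! c \<le> y" unfolding e e2 using zs(2)[rule_format, of c] c assms(1) by simp
  qed
  then show ?thesis by blast
qed



lemma qKT1_unf: "T \<in> qKT1 \<longleftrightarrow> (T 0 = [] \<and> finite {i. T i \<noteq> []} \<and>
     (\<forall>i. \<forall>x \<in> set (T i). 0 < x) \<and>
     (\<forall>i. sorted_wrt (\<ge>) (T i) \<and> (\<forall>x \<in> set (T i). x \<le> i)) \<and>
     (\<forall>r s c. r \<noteq> s \<and> c < length (T r) \<and> c < length (T s) \<longrightarrow> T r ! c \<noteq> T s ! c) \<and>
     (\<forall>r s. s < r \<and> T r \<noteq> [] \<and> T s \<noteq> [] \<longrightarrow> T s ! 0 < T r ! 0) \<and>
     (\<forall>r s c. s < r \<and> c < length (T r) \<and> c < length (T s) \<and> T r ! c < T s ! c \<longrightarrow>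
        Suc c < length (T s) \<and> T r ! c < T s ! Suc c) \<and>
     (\<forall>r s c. s < r \<and> length (T s) < length (T r) \<and> c < length (T s) \<and> Suc c < length (T r)
        \<longrightarrow> T s ! c < T r ! Suc c)) \<and> (\<forall>i. T i \<noteq> [] \<longrightarrow> T i ! 0 = i)"
  unfolding qKT1_def qKT_def is_filling_def by simp

context fixes T assumes Q: "T \<in> qKT1" begin
lemma qD1: "T 0 = []" using Q[unfolded qKT1_unf] by (elim conjE) assumption
lemma qD2: "finite {i. T i \<noteq> []}" using Q[unfolded qKT1_unf] by (elim conjE) assumption
lemma qD3: assumes "x \<in> set (T i)" shows "0 < x"
proof -
  have H: "\<forall>i. \<forall>x \<in> set (T i). 0 < x" using Q[unfolded qKT1_unf] by (elim conjE) assumption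
  show ?thesis using H[rule_format, where i=i] assms by simp
qed
lemma qD4: shows "sorted_wrt (\<ge>) (T i)"
proof -
  have H: "\<forall>i. sorted_wrt (\<ge>) (T i) \<and> (\<forall>x \<in> set (T i). x \<le> i)" using Q[unfolded qKT1_unf] by (elim conjE) assumption
  show ?thesis using H[rule_format, where i=i]  by simp
qed
lemma qD5: assumes "x \<in> set (T i)" shows "x \<le> i"
proof -
  have H: "\<forall>i. sorted_wrt (\<ge>) (T i) \<and> (\<forall>x \<in> set (T i). x \<le> i)" using Q[unfolded qKT1_unf] by (elim conjE) assumption
  show ?thesis using H[rule_format, where i=i] assms by simp
qed
lemma qD6: assumes "r \<noteq> s" "c < length (T r)" "c < length (T s)" shows "T r ! c \<noteq> T s ! c"
proof -
  have H: "\<forall>r s c. r \<noteq> s \<and> c < length (T r) \<and> c < length (T s) \<longrightarrow> T r ! c \<noteq> T s ! c" using Q[unfolded qKT1_unf] by (elim conjE) assumption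
  show ?thesis using H[rule_format, where r=r and s=s and c=c] assms by simp
qed
lemma qD7: assumes "s < r" "c < length (T r)" "c < length (T s)" "T r ! c < T s ! c" shows "Suc c < length (T s) \<and> T r ! c < T s ! Suc c"
proof -
  have H: "\<forall>r s c. s < r \<and> c < length (T r) \<and> c < length (T s) \<and> T r ! c < T s ! c \<longrightarrow>
        Suc c < length (T s) \<and> T r ! c < T s ! Suc c" using Q[unfolded qKT1_unf] by (elim conjE) assumption
  show ?thesis using H[rule_format, where r=r and s=s and c=c] assms by simp
qed
lemma qD8: assumes "s < r" "length (T s) < length (T r)" "c < length (T s)" "Suc c < length (T r)" shows "T s ! c < T r ! Suc c"
proof -
  have H: "\<forall>r s c. s < r \<and> length (T s) < length (T r) \<and> c < length (T s) \<and> Suc c < length (T r)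
        \<longrightarrow> T s ! c < T r ! Suc c" using Q[unfolded qKT1_unf] by (elim conjE) assumption
  show ?thesis using H[rule_format, where r=r and s=s and c=c] assms by simp
qed
lemma qD9: assumes "T i \<noteq> []" shows "T i ! 0 = i"
proof -
  have H: "\<forall>i. T i \<noteq> [] \<longrightarrow> T i ! 0 = i" using Q[unfolded qKT1_unf] by (elim conjE) assumption
  show ?thesis using H[rule_format, where i=i] assms by simp
qed
end

lemmas qKT1D = qD1 qD2 qD3 qD4 qD5 qD6 qD7 qD8 qD9

lemma qKT1I:
  assumes "T 0 = []" "finite {i. T i \<noteq> []}"
    "\<And>i x. x \<in> set (T i) \<Longrightarrow> 0 < x"
    "\<And>i. sorted_wrt (\<ge>) (T i)" "\<And>i x. x \<in> set (T i) \<Longrightarrow> x \<le> i"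
    "\<And>r s c. r \<noteq> s \<Longrightarrow> c < length (T r) \<Longrightarrow> c < length (T s) \<Longrightarrow> T r ! c \<noteq> T s ! c"
    "\<And>r s c. s < r \<Longrightarrow> c < length (T r) \<Longrightarrow> c < length (T s) \<Longrightarrow> T r ! c < T s ! c \<Longrightarrow>
        Suc c < length (T s) \<and> T r ! c < T s ! Suc c"
    "\<And>r s c. s < r \<Longrightarrow> length (T s) < length (T r) \<Longrightarrow> c < length (T s) \<Longrightarrow> Suc c < length (T r)
        \<Longrightarrow> T s ! c < T r ! Suc c"
    "\<And>i. T i \<noteq> [] \<Longrightarrow> T i ! 0 = i"
  shows "T \<in> qKT1"
  unfolding qKT1_unf
proof (intro conjI allI impI ballI)
  fix r s assume "s < r \<and> T r \<noteq> [] \<and> T s \<noteq> []"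
  then show "T s ! 0 < T r ! 0" using assms(9) by simp
next
  fix r s c assume "r \<noteq> s \<and> c < length (T r) \<and> c < length (T s)"
  then show "T r ! c \<noteq> T s ! c" using assms(6) by simp
next
  fix r s c assume "s < r \<and> c < length (T r) \<and> c < length (T s) \<and> T r ! c < T s ! c"
  then show "Suc c < length (T s)" "T r ! c < T s ! Suc c" using assms(7) by blast+
next
  fix r s c assume "s < r \<and> length (T s) < length (T r) \<and> c < length (T s) \<and> Suc c < length (T r)"
  then show "T s ! c < T r ! Suc c" using assms(8) by simp
qed (use assms in simp_all)

lemma qKT1_del: assumes "T \<in> qKT1" shows "T(j := []) \<in> qKT1"
proof (rule qKT1I)
  note D = qKT1D[OF assms]
  show "(T(j := [])) 0 = []" using D(1) by simp
  show "finite {i. (T(j := [])) i \<noteq> []}" by (rule finite_subset[OF _ D(2)]) auto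
  show "\<And>i x. x \<in> set ((T(j := [])) i) \<Longrightarrow> 0 < x" using D(3) by (auto split: if_splits)
  show "\<And>i. sorted_wrt (\<ge>) ((T(j := [])) i)" using D(4) by simp
  show "\<And>i x. x \<in> set ((T(j := [])) i) \<Longrightarrow> x \<le> i" using D(5) by (auto split: if_splits)
  show "\<And>r s c. r \<noteq> s \<Longrightarrow> c < length ((T(j := [])) r) \<Longrightarrow> c < length ((T(j := [])) s) \<Longrightarrow> (T(j := [])) r ! c \<noteq> (T(j := [])) s ! c"
    using D(6) by (auto split: if_splits)
  show "\<And>r s c. s < r \<Longrightarrow> c < length ((T(j := [])) r) \<Longrightarrow> c < length ((T(j := [])) s) \<Longrightarrow> (T(j := [])) r ! c < (T(j := [])) s ! c \<Longrightarrow>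
        Suc c < length ((T(j := [])) s) \<and> (T(j := [])) r ! c < (T(j := [])) s ! Suc c"
    using D(7) by (auto split: if_splits)
  show "\<And>r s c. s < r \<Longrightarrow> length ((T(j := [])) s) < length ((T(j := [])) r) \<Longrightarrow> c < length ((T(j := [])) s) \<Longrightarrow> Suc c < length ((T(j := [])) r)
        \<Longrightarrow> (T(j := [])) s ! c < (T(j := [])) r ! Suc c"
    using D(8) by (auto split: if_splits)
  show "\<And>i. (T(j := [])) i \<noteq> [] \<Longrightarrow> (T(j := [])) i ! 0 = i" using D(9) by (auto split: if_splits)
qed

lemma greedy_dec:
  assumes g: "greedy cs k row" shows "i \<le> j \<Longrightarrow> j \<le> k \<Longrightarrow> row!j \<le> row!i"
proof (induction j)
  case 0 then show ?case by simp
next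
  case (Suc j)
  then show ?case
  proof (cases "i = Suc j")
    case False
    then have "row!j \<le> row!i" using Suc by simp
    moreover have "row!Suc j \<le> row!j" using g Suc.prems unfolding greedy_def by auto
    ultimately show ?thesis by simp
  qed simp
qed

lemma add_row:
  assumes T': "T' \<in> qKT1" and g: "greedy cs k row" and e: "T' (row!0) = []"
    and cols: "\<forall>c\<le>k. fil_colset T' c = cs!c - {row!c}"
    and lenT: "\<forall>i. length (T' i) \<le> Suc k"
    and pos: "\<forall>c\<le>k. \<forall>x\<in>cs!c. 0 < x"
  shows "T'(row!0 := row) \<in> qKT1"
proof -
  note D = qKT1D[OF T']
  define r0 where "r0 = row!0"
  have lr: "length row = Suc k" using g unfolding greedy_def by simp
  have rin: "\<And>c. c \<le> k \<Longrightarrow> row!c \<in> cs!c" using g unfolding greedy_def by simp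
  have rmin: "\<And>y. y \<in> cs!k \<Longrightarrow> row!k \<le> y" using g unfolding greedy_def by simp
  have rgr: "\<And>c y. c < k \<Longrightarrow> y \<in> cs!c \<Longrightarrow> row!Suc c \<le> y \<Longrightarrow> row!c \<le> y"
    using g unfolding greedy_def by simp
  have rdec: "\<And>i j. i \<le> j \<Longrightarrow> j \<le> k \<Longrightarrow> row!j \<le> row!i" using greedy_dec[OF g] by blast
  have memS: "\<And>s c. c < length (T' s) \<Longrightarrow> T' s!c \<in> cs!c \<and> T' s!c \<noteq> row!c \<and> c \<le> k"
  proof -
    fix s c assume c: "c < length (T' s)"
    then have ck: "c \<le> k" using lenT[rule_format, of s] by simp
    have "T' s!c \<in> fil_colset T' c" unfolding fil_colset_def using c by blast
    then show "T' s!c \<in> cs!c \<and> T' s!c \<noteq> row!c \<and> c \<le> k" using cols ck by auto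
  qed
  have Sdec: "\<And>s c. Suc c < length (T' s) \<Longrightarrow> T' s!Suc c \<le> T' s!c"
    using D(4) sorted_wrt_nth_less by fastforce
  have X: "\<And>s c. s < r0 \<Longrightarrow> c < length (T' s) \<Longrightarrow> T' s!c < row!c"
  proof -
    fix s c assume s: "s < r0"
    show "c < length (T' s) \<Longrightarrow> T' s!c < row!c"
    proof (induction c)
      case 0 then have "T' s \<noteq> []" by auto
      then show ?case using D(9) s unfolding r0_def by simp
    next
      case (Suc c)
      then have IH: "T' s!c < row!c" by simp
      have m: "T' s!Suc c \<in> cs!Suc c" "T' s!Suc c \<noteq> row!Suc c" "Suc c \<le> k" using memS[OF Suc.prems] by auto
      have m2: "T' s!c \<in> cs!c" using memS Suc.prems by simp
      show ?case
      proof (rule ccontr)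
        assume "\<not> T' s ! Suc c < row ! Suc c"
        then have "row!Suc c \<le> T' s!c" using m(2) Sdec[OF Suc.prems] by simp
        then have "row!c \<le> T' s!c" using rgr[OF _ m2] m(3) by simp
        then show False using IH by simp
      qed
    qed
  qed
  have r0pos: "0 < r0" using pos[rule_format, of 0] rin[of 0] unfolding r0_def by simp
  have rowset: "\<And>x. x \<in> set row \<Longrightarrow> 0 < x \<and> x \<le> r0"
  proof -
    fix x assume "x \<in> set row"
    then obtain c where c: "c < length row" "x = row!c" by (auto simp: in_set_conv_nth)
    then have "c \<le> k" using lr by simp
    then show "0 < x \<and> x \<le> r0" using pos[rule_format, of c] rin[of c] rdec[of 0 c] c unfolding r0_def by auto
  qed
  let ?T = "T'(r0 := row)"
  show ?thesis unfolding r0_def[symmetric]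
  proof (rule qKT1I)
    show "?T 0 = []" using D(1) r0pos by simp
    show "finite {i. ?T i \<noteq> []}" by (rule finite_subset[of _ "insert r0 {i. T' i \<noteq> []}"]) (use D(2) in auto)
    show "\<And>i x. x \<in> set (?T i) \<Longrightarrow> 0 < x" using D(3) rowset by (auto split: if_splits)
    show "\<And>i x. x \<in> set (?T i) \<Longrightarrow> x \<le> i" using D(5) rowset by (auto split: if_splits)
    show "\<And>i. sorted_wrt (\<ge>) (?T i)"
    proof -
      fix i
      have "sorted_wrt (\<ge>) row" unfolding sorted_wrt_iff_nth_less using rdec lr by auto
      then show "sorted_wrt (\<ge>) (?T i)" using D(4) by simp
    qed
    show "\<And>r s c. r \<noteq> s \<Longrightarrow> c < length (?T r) \<Longrightarrow> c < length (?T s) \<Longrightarrow> ?T r ! c \<noteq> ?T s ! c"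
    proof -
      fix r s c assume rs: "r \<noteq> s" and c1: "c < length (?T r)" and c2: "c < length (?T s)"
      show "?T r ! c \<noteq> ?T s ! c"
      proof (cases "r = r0")
        case True then show ?thesis using rs memS[of c s] c2 by auto
      next
        case False
        show ?thesis
        proof (cases "s = r0")
          case True then show ?thesis using rs memS[of c r] c1 False by auto
        next
          case False2: False
          then show ?thesis using D(6)[OF rs] c1 c2 False by simp
        qed
      qed
    qed
    show "\<And>i. ?T i \<noteq> [] \<Longrightarrow> ?T i ! 0 = i" using D(9) unfolding r0_def by auto
    show "\<And>r s c. s < r \<Longrightarrow> c < length (?T r) \<Longrightarrow> c < length (?T s) \<Longrightarrow> ?T r ! c < ?T s ! c \<Longrightarrow>
        Suc c < length (?T s) \<and> ?T r ! c < ?T s ! Suc c"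
    proof -
      fix r s c assume sr: "s < r" and c1: "c < length (?T r)" and c2: "c < length (?T s)" and lt: "?T r ! c < ?T s ! c"
      show "Suc c < length (?T s) \<and> ?T r ! c < ?T s ! Suc c"
      proof (cases "r = r0")
        case True
        then have "s \<noteq> r0" using sr by simp
        then have "T' s!c < row!c" using X[of s c] sr True c2 by simp
        then show ?thesis using lt True \<open>s \<noteq> r0\<close> by simp
      next
        case rn: False
        show ?thesis
        proof (cases "s = r0")
          case True
          have cS: "c < length (T' r)" using c1 rn by simp
          have m: "T' r!c \<in> cs!c" "c \<le> k" using memS[OF cS] by auto
          have lt': "T' r!c < row!c" using lt True rn by simp
          have ck: "c < k"
          proof (rule ccontr)
            assume "\<not> c < k" then have "c = k" using m by simp
            then show False using rmin[of "T' r!c"] m lt' by simp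
          qed
          have "T' r!c < row!Suc c"
          proof (rule ccontr)
            assume "\<not> T' r!c < row!Suc c"
            then have "row!c \<le> T' r!c" using rgr[OF ck m(1)] by simp
            then show False using lt' by simp
          qed
          then show ?thesis using True rn ck lr by simp
        next
          case False
          then show ?thesis using D(7)[of s r c] sr c1 c2 lt rn by simp
        qed
      qed
    qed
    show "\<And>r s c. s < r \<Longrightarrow> length (?T s) < length (?T r) \<Longrightarrow> c < length (?T s) \<Longrightarrow> Suc c < length (?T r)
        \<Longrightarrow> ?T s ! c < ?T r ! Suc c"
    proof -
      fix r s c assume sr: "s < r" and l: "length (?T s) < length (?T r)" and c1: "c < length (?T s)" and c2: "Suc c < length (?T r)"
      show "?T s ! c < ?T r ! Suc c"
      proof (cases "r = r0")
        case True
        then have sn: "s \<noteq> r0" using sr by simp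
        have cS: "c < length (T' s)" using c1 sn by simp
        have x: "T' s!c < row!c" using X[of s c] sr True cS by simp
        have m: "T' s!c \<in> cs!c" using memS[OF cS] by auto
        have ck: "c < k" using c2 True lr by simp
        have "T' s!c < row!Suc c"
        proof (rule ccontr)
          assume "\<not> T' s!c < row!Suc c"
          then have "row!c \<le> T' s!c" using rgr[OF ck m] by simp
          then show False using x by simp
        qed
        then show ?thesis using True sn by simp
      next
        case rn: False
        show ?thesis
        proof (cases "s = r0")
          case True
          then show ?thesis using l rn lenT[rule_format, of r] lr by simp
        next
          case False
          then show ?thesis using D(8)[of s r c] sr l c1 c2 rn by simp
        qed
      qed
    qed
  qed
qed



definition cnt :: "nat set \<Rightarrow> nat \<Rightarrow> nat" where "cnt C t = card {x\<in>C. t \<le> x}"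

definition good :: "nat set list \<Rightarrow> bool" where
  "good cs \<longleftrightarrow> (\<forall>C\<in>set cs. finite C \<and> (\<forall>x\<in>C. 0 < x)) \<and>
     (\<forall>c t. Suc c < length cs \<longrightarrow> cnt (cs!Suc c) t \<le> cnt (cs!c) t)"

lemma cnt0: "cnt C 0 = card C" unfolding cnt_def by simp

lemma good_fin: "good cs \<Longrightarrow> c < length cs \<Longrightarrow> finite (cs!c)"
  unfolding good_def by auto

lemma good_pos: "good cs \<Longrightarrow> c < length cs \<Longrightarrow> x \<in> cs!c \<Longrightarrow> 0 < x"
  unfolding good_def by auto

lemma good_cnt: "good cs \<Longrightarrow> Suc c < length cs \<Longrightarrow> cnt (cs!Suc c) t \<le> cnt (cs!c) t"
  unfolding good_def by blast

lemma good_card: assumes "good cs" shows "c < length cs \<Longrightarrow> card (cs!c) \<le> card (cs!0)"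
proof (induction c)
  case 0 then show ?case by simp
next
  case (Suc c)
  then have "card (cs!Suc c) \<le> card (cs!c)" using good_cnt[OF assms Suc.prems, of 0] by (simp add: cnt0)
  then show ?case using Suc by simp
qed

lemma good_ex: assumes "good cs" "Suc c < length cs" "z \<in> cs!Suc c" shows "\<exists>y\<in>cs!c. z \<le> y"
proof -
  have f: "finite (cs!Suc c)" using good_fin[OF assms(1,2)] .
  have "0 < cnt (cs!Suc c) z" unfolding cnt_def using assms(3) f by (subst card_gt_0_iff) auto
  then have "0 < cnt (cs!c) z" using good_cnt[OF assms(1,2), of z] by simp
  then have "{x\<in>cs!c. z \<le> x} \<noteq> {}" unfolding cnt_def by (metis card.empty less_irrefl)
  then show ?thesis by auto
qed

lemma cnt_diff: "finite C \<Longrightarrow> cnt (C - {x}) t = (if x \<in> C \<and> t \<le> x then cnt C t - 1 else cnt C t)"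
proof -
  assume f: "finite C"
  have "{y\<in>C - {x}. t \<le> y} = {y\<in>C. t \<le> y} - {x}" by auto
  then show ?thesis unfolding cnt_def using f by (simp add: card_Diff_singleton_if)
qed

lemma good_step:
  assumes gd: "good cs" and g: "greedy cs k row" and emp: "\<forall>c. k < c \<and> c < length cs \<longrightarrow> cs!c = {}"
  shows "good (map (\<lambda>i. if i < Suc k then cs!i - {row!i} else cs!i) [0..<length cs])"
    (is "good ?cs")
proof -
  have nth: "\<And>i. i < length cs \<Longrightarrow> ?cs!i = (if i < Suc k then cs!i - {row!i} else cs!i)" by simp
  have A1: "\<forall>C\<in>set ?cs. finite C \<and> (\<forall>x\<in>C. 0 < x)"
  proof
    fix C assume "C \<in> set ?cs"
    then obtain i where i: "i < length cs" "C = ?cs!i" by (auto simp: in_set_conv_nth)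
    then show "finite C \<and> (\<forall>x\<in>C. 0 < x)" using good_fin[OF gd i(1)] good_pos[OF gd i(1)] by auto
  qed
  have A2: "cnt (?cs!Suc c) t \<le> cnt (?cs!c) t" if c: "Suc c < length ?cs" for c t
  proof -
    have c': "Suc c < length cs" using c by simp
    show ?thesis
    proof (cases "k < Suc c")
      case True
      then have "?cs!Suc c = {}" using emp c' nth[OF c'] by auto
      then show ?thesis unfolding cnt_def by simp
    next
      case False
      then have ck: "c < k" by simp
      define A where "A = cs!c"
      define B where "B = cs!Suc c"
      define a where "a = row!c"
      define b where "b = row!Suc c"
      have fA: "finite A" "finite B" unfolding A_def B_def using good_fin[OF gd] c' by auto
      have aA: "a \<in> A" "b \<in> B" "b \<le> a" and amin: "\<forall>y\<in>A. b \<le> y \<longrightarrow> a \<le> y"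
        using g ck unfolding greedy_def A_def B_def a_def b_def by auto
      have e1: "?cs!Suc c = B - {b}" using nth[OF c'] ck unfolding B_def b_def by simp
      have e2: "?cs!c = A - {a}" using nth[of c] c' ck unfolding A_def a_def by simp
      have gAB: "\<And>t. cnt B t \<le> cnt A t" using good_cnt[OF gd c'] unfolding A_def B_def by simp
      show ?thesis unfolding e1 e2 cnt_diff[OF fA(1)] cnt_diff[OF fA(2)]
      proof (cases "t \<le> b")
        case True
        then show "(if b \<in> B \<and> t \<le> b then cnt B t - 1 else cnt B t) \<le> (if a \<in> A \<and> t \<le> a then cnt A t - 1 else cnt A t)"
          using aA gAB[of t] by simp
      next
        case tb: False
        show "(if b \<in> B \<and> t \<le> b then cnt B t - 1 else cnt B t) \<le> (if a \<in> A \<and> t \<le> a then cnt A t - 1 else cnt A t)"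
        proof (cases "t \<le> a")
          case False then show ?thesis using tb gAB[of t] by simp
        next
          case ta: True
          have "{x\<in>B. t \<le> x} \<subset> {x\<in>B. b \<le> x}" using tb aA by auto
          then have "cnt B t < cnt B b" unfolding cnt_def using fA by (intro psubset_card_mono) auto
          moreover have "{x\<in>A. b \<le> x} = {x\<in>A. t \<le> x}" using amin ta tb by force
          then have "cnt A b = cnt A t" unfolding cnt_def by simp
          ultimately have "cnt B t < cnt A t" using gAB[of b] by simp
          then show ?thesis using tb ta aA by simp
        qed
      qed
    qed
  qed
  show ?thesis unfolding good_def using A1 A2 by blast
qed

lemma fil_colset_upd:
  "G j = [] \<Longrightarrow> fil_colset (G(j := row)) c = fil_colset G c \<union> (if c < length row then {row!c} else {})"
  unfolding fil_colset_def by (auto split: if_splits) (metis list.size(3) not_less0)+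

lemma fil_colset_empty: "fil_colset (\<lambda>_. []) c = {}" unfolding fil_colset_def by simp

lemma emptyF_qKT1: "(\<lambda>_. []) \<in> qKT1" by (rule qKT1I) auto

lemma lemB:
  "good cs \<Longrightarrow> (cs \<noteq> [] \<Longrightarrow> card (cs!0) \<le> n) \<Longrightarrow>
   \<exists>T. psi_aux n cs = Some T \<and> T \<in> qKT1 \<and> (\<forall>c<length cs. fil_colset T c = cs!c) \<and> (\<forall>i. length (T i) \<le> length cs)"
proof (induction n arbitrary: cs)
  case 0
  have "all_empty cs"
    unfolding all_empty_def
  proof
    fix C assume "C \<in> set cs"
    then obtain c where c: "c < length cs" "C = cs!c" by (auto simp: in_set_conv_nth)
    then have "cs \<noteq> []" by auto
    then have "card (cs!0) = 0" using 0(2) by simp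
    then have "card C = 0" using good_card[OF 0(1) c(1)] c by simp
    then show "C = {}" using good_fin[OF 0(1) c(1)] c by simp
  qed
  then show ?case using emptyF_qKT1 by (auto simp: fil_colset_empty all_empty_def)
next
  case (Suc n)
  show ?case
  proof (cases "all_empty cs")
    case True
    then show ?thesis using emptyF_qKT1 by (auto simp: fil_colset_empty all_empty_def)
  next
    case ne: False
    define K where "K = {i. i < length cs \<and> cs!i \<noteq> {}}"
    define k where "k = Max K"
    have Kne: "K \<noteq> {}" using ne unfolding K_def all_empty_def by (auto simp: in_set_conv_nth)
    have Kfin: "finite K" unfolding K_def by simp
    have kK: "k \<in> K" unfolding k_def using Kne Kfin by simp
    have kl: "k < length cs" "cs!k \<noteq> {}" using kK unfolding K_def by auto
    have emp: "\<forall>c. k < c \<and> c < length cs \<longrightarrow> cs!c = {}"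
    proof (intro allI impI)
      fix c assume a: "k < c \<and> c < length cs"
      show "cs!c = {}"
      proof (rule ccontr)
        assume "cs!c \<noteq> {}"
        then have "c \<in> K" using a unfolding K_def by simp
        then have "c \<le> k" unfolding k_def using Kfin by simp
        then show False using a by simp
      qed
    qed
    have "\<forall>c<k. \<forall>z\<in>cs!Suc c. \<exists>y\<in>cs!c. z \<le> y"
    proof (intro allI impI ballI)
      fix c z assume "c < k" "z \<in> cs!Suc c"
      then show "\<exists>y\<in>cs!c. z \<le> y" using good_ex[OF Suc.prems(1), of c z] kl by simp
    qed
    then obtain row where g: "greedy cs k row" using greedy_exists[OF kl] by blast
    define cs' where "cs' = map (\<lambda>i. if i < Suc k then cs!i - {row!i} else cs!i) [0..<length cs]"
    have step: "psi_step cs = Some (row, cs')" unfolding cs'_def using step_ok[OF k_def[unfolded K_def] g] .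
    have gd': "good cs'" unfolding cs'_def using good_step[OF Suc.prems(1) g emp] .
    have lr: "length row = Suc k" using g unfolding greedy_def by simp
    have rin: "\<And>c. c \<le> k \<Longrightarrow> row!c \<in> cs!c" using g unfolding greedy_def by simp
    have cs0: "cs \<noteq> []" using kl by auto
    have lcs': "length cs' = length cs" unfolding cs'_def by simp
    have c0: "cs'!0 = cs!0 - {row!0}" unfolding cs'_def using cs0 by simp
    have fin0: "finite (cs!0)" using good_fin[OF Suc.prems(1)] cs0 by simp
    have "card (cs'!0) = card (cs!0) - 1" unfolding c0 using rin[of 0] fin0 by simp
    then have "card (cs'!0) \<le> n" using Suc.prems(2)[OF cs0] by simp
    then obtain T' where T': "psi_aux n cs' = Some T'" "T' \<in> qKT1" "\<forall>c<length cs'. fil_colset T' c = cs'!c"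
      "\<forall>i. length (T' i) \<le> length cs'"
      using Suc.IH[OF gd'] by blast
    have cols: "\<forall>c\<le>k. fil_colset T' c = cs!c - {row!c}"
      using T'(3) kl lcs' unfolding cs'_def by auto
    have lenT: "\<forall>i. length (T' i) \<le> Suc k"
    proof (rule ccontr)
      assume "\<not> (\<forall>i. length (T' i) \<le> Suc k)"
      then obtain i where i: "Suc k < length (T' i)" by (auto simp: not_le)
      then have "T' i ! Suc k \<in> fil_colset T' (Suc k)" unfolding fil_colset_def by blast
      moreover have "length (T' i) \<le> length cs" using T'(4) lcs' by simp
      then have sk: "Suc k < length cs" using i by simp
      then have "cs'!(Suc k) = {}" using emp unfolding cs'_def by simp
      ultimately show False using T'(3) sk lcs' by simp
    qed
    have e: "T' (row!0) = []"
    proof (rule ccontr)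
      assume "T' (row!0) \<noteq> []"
      then have "T' (row!0) ! 0 = row!0" using qKT1D(9)[OF T'(2)] by simp
      moreover have "T' (row!0) ! 0 \<in> fil_colset T' 0" unfolding fil_colset_def using \<open>T' (row!0) \<noteq> []\<close> by blast
      ultimately show False using cols by auto
    qed
    have pos: "\<forall>c\<le>k. \<forall>x\<in>cs!c. 0 < x"
    proof (intro allI impI ballI)
      fix c x assume "c \<le> k" "x \<in> cs!c"
      then show "0 < x" using good_pos[OF Suc.prems(1), of c x] kl by simp
    qed
    have Tq: "T'(row!0 := row) \<in> qKT1" using add_row[OF T'(2) g e cols lenT pos] .
    have hd: "hd row = row!0" using lr by (cases row) auto
    have res: "psi_aux (Suc n) cs = Some (T'(row!0 := row))"
      using ne step T'(1) hd by simp
    show ?thesis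
    proof (intro exI conjI allI impI)
      show "psi_aux (Suc n) cs = Some (T'(row!0 := row))" by fact
      show "T'(row!0 := row) \<in> qKT1" by fact
      fix c assume c: "c < length cs"
      show "fil_colset (T'(row!0 := row)) c = cs!c"
      proof (cases "c \<le> k")
        case True then show ?thesis unfolding fil_colset_upd[where G=T' and j="row!0", OF e] using cols rin[OF True] lr by auto
      next
        case False then show ?thesis unfolding fil_colset_upd[where G=T' and j="row!0", OF e] using T'(3) lcs' c lr unfolding cs'_def by auto
      qed
    next
      fix i show "length ((T'(row!0 := row)) i) \<le> length cs" using lenT lr kl T'(4) lcs' by auto
    qed
  qed
qed



lemma fil_colset_del:
  assumes Q: "T \<in> qKT1"
  shows "fil_colset (T(j := [])) c = (if c < length (T j) then fil_colset T c - {T j!c} else fil_colset T c)"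
proof (rule set_eqI)
  fix x
  show "x \<in> fil_colset (T(j := [])) c \<longleftrightarrow> x \<in> (if c < length (T j) then fil_colset T c - {T j!c} else fil_colset T c)"
  proof
    assume "x \<in> fil_colset (T(j := [])) c"
    then obtain i where i: "x = (T(j := [])) i ! c" "c < length ((T(j := [])) i)" unfolding fil_colset_def by blast
    then have ij: "i \<noteq> j" by (cases "i = j") auto
    then have i': "x = T i ! c" "c < length (T i)" using i by auto
    have "x \<in> fil_colset T c" using i' unfolding fil_colset_def by blast
    moreover have "c < length (T j) \<Longrightarrow> x \<noteq> T j ! c" using qKT1D(6)[OF Q ij i'(2)] i'(1) by simp
    ultimately show "x \<in> (if c < length (T j) then fil_colset T c - {T j!c} else fil_colset T c)" by auto
  next
    assume a: "x \<in> (if c < length (T j) then fil_colset T c - {T j!c} else fil_colset T c)"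
    then obtain i where i: "x = T i ! c" "c < length (T i)" unfolding fil_colset_def by (auto split: if_splits)
    have ij: "i \<noteq> j" using a i by (auto split: if_splits)
    then show "x \<in> fil_colset (T(j := [])) c" using i unfolding fil_colset_def by auto
  qed
qed

lemma colset_ne: "fil_colset T c \<noteq> {} \<longleftrightarrow> (\<exists>i. c < length (T i))"
  unfolding fil_colset_def by auto

lemma lemA:
  "T \<in> qKT1 \<Longrightarrow> (\<forall>i. length (T i) \<le> L) \<Longrightarrow> card {i. T i \<noteq> []} \<le> n \<Longrightarrow>
   psi_aux n (map (fil_colset T) [0..<L]) = Some T"
proof (induction n arbitrary: T)
  case (0 T)
  have "{i. T i \<noteq> []} = {}" using 0(3) qKT1D(2)[OF 0(1)] by simp
  then have T: "T = (\<lambda>_. [])" by auto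
  have "all_empty (map (fil_colset T) [0..<L])" unfolding all_empty_def T fil_colset_empty by auto
  then show ?case using T by simp
next
  case (Suc n T)
  note Q = Suc.prems(1)
  define cs where "cs = map (fil_colset T) [0..<L]"
  show ?case unfolding cs_def[symmetric]
  proof (cases "\<forall>i. T i = []")
    case True
    then have T: "T = (\<lambda>_. [])" by auto
    have "all_empty cs" unfolding cs_def all_empty_def T fil_colset_empty by auto
    then show "psi_aux (Suc n) cs = Some T" using T by simp
  next
    case False
    then obtain j where j: "T j \<noteq> []" by auto
    have L0: "0 < L" using Suc.prems(2) j by (metis length_greater_0_conv less_le_trans)
    have csn: "\<And>c. c < L \<Longrightarrow> cs!c = fil_colset T c" unfolding cs_def by simp
    have lcs: "length cs = L" unfolding cs_def by simp
    have ne: "\<not> all_empty cs"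
    proof
      assume "all_empty cs"
      then have "cs!0 = {}" using L0 lcs unfolding all_empty_def by auto
      then show False using csn[OF L0] colset_ne[of T 0] j by auto
    qed
    define K where "K = {i. i < length cs \<and> cs!i \<noteq> {}}"
    define k where "k = Max K"
    have Kfin: "finite K" unfolding K_def by simp
    have Kne: "0 \<in> K" unfolding K_def using csn[OF L0] colset_ne[of T 0] j L0 lcs by auto
    have kK: "k \<in> K" unfolding k_def using Kne Kfin by (metis Max_in empty_iff)
    have kl: "k < L" using kK lcs unfolding K_def by simp
    have kne: "fil_colset T k \<noteq> {}" using kK csn[OF kl] unfolding K_def by simp
    have lenk: "\<forall>i. length (T i) \<le> Suc k"
    proof (rule ccontr)
      assume "\<not> (\<forall>i. length (T i) \<le> Suc k)"
      then obtain i where i: "Suc k < length (T i)" by (auto simp: not_le)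
      have sl: "Suc k < L" using i Suc.prems(2) by (metis less_le_trans)
      have "cs!Suc k \<noteq> {}" using csn[OF sl] colset_ne[of T "Suc k"] i by auto
      then have "Suc k \<in> K" unfolding K_def using sl lcs by simp
      then have "Suc k \<le> k" unfolding k_def using Kfin by simp
      then show False by simp
    qed
    define yk where "yk = (LEAST y. y \<in> fil_colset T k)"
    have yk: "yk \<in> fil_colset T k" unfolding yk_def using kne by (auto intro: LeastI)
    then obtain i0 where i0: "yk = T i0 ! k" "k < length (T i0)" unfolding fil_colset_def by blast
    have li0: "length (T i0) = Suc k" using i0(2) lenk by (metis le_antisym Suc_leI)
    define row where "row = T i0"
    have Sdec: "\<And>s c. Suc c < length (T s) \<Longrightarrow> T s!Suc c \<le> T s!c"
      using qKT1D(4)[OF Q] sorted_wrt_nth_less by fastforce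
    have g: "greedy cs k row"
      unfolding greedy_def
    proof (intro conjI allI impI ballI)
      show "length row = Suc k" using li0 row_def by simp
      show "k < length cs" using kl lcs by simp
      fix c assume c: "c \<le> k"
      then have "c < L" using kl by simp
      then show "row!c \<in> cs!c" using csn c li0 unfolding row_def fil_colset_def by auto
    next
      fix y assume "y \<in> cs!k"
      then have "y \<in> fil_colset T k" using csn[OF kl] by simp
      then show "row!k \<le> y" using i0(1) Least_le[of "\<lambda>y. y \<in> fil_colset T k" y] unfolding row_def yk_def by simp
    next
      fix c assume c: "c < k"
      show "row!Suc c \<le> row!c" using Sdec[of c i0] c li0 unfolding row_def by simp
    next
      fix c y assume c: "c < k" and y: "y \<in> cs!c" and ry: "row!Suc c \<le> y"
      have "y \<in> fil_colset T c" using y csn[of c] c kl by simp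
      then obtain s where s: "y = T s ! c" "c < length (T s)" unfolding fil_colset_def by blast
      show "row!c \<le> y"
      proof (rule ccontr)
        assume "\<not> row!c \<le> y"
        then have lt: "T s ! c < T i0 ! c" using s row_def by simp
        then have si: "s \<noteq> i0" by auto
        show False
        proof (cases "i0 < s")
          case True
          have "T s ! c < T i0 ! Suc c" using qKT1D(7)[OF Q True s(2) _ lt] i0(2) c by simp
          then show False using ry s row_def by simp
        next
          case False
          then have si0: "s < i0" using si by simp
          show False
          proof (cases "length (T s) < length (T i0)")
            case True
            have "T s ! c < T i0 ! Suc c" using qKT1D(8)[OF Q si0 True s(2)] li0 c by simp
            then show False using ry s row_def by simp
          next
            case False
            then have ls: "length (T s) = Suc k" using lenk li0 by (metis le_antisym not_le)
            have "T s ! k \<in> fil_colset T k" using ls unfolding fil_colset_def by auto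
            then have "T i0 ! k \<le> T s ! k" using i0(1) Least_le[of "\<lambda>y. y \<in> fil_colset T k" "T s ! k"] unfolding yk_def by simp
            moreover have "T i0 ! k \<noteq> T s ! k" using qKT1D(6)[OF Q] si li0 ls by simp
            ultimately have "T i0 ! k < T s ! k" by simp
            then have "Suc k < length (T s)" using qKT1D(7)[OF Q si0, of k] li0 ls by simp
            then show False using ls by simp
          qed
        qed
      qed
    qed
    have step: "psi_step cs = Some (row, map (\<lambda>i. if i < Suc k then cs!i - {row!i} else cs!i) [0..<length cs])"
      using step_ok[OF k_def[unfolded K_def] g] .
    define T' where "T' = T(i0 := [])"
    have Q': "T' \<in> qKT1" unfolding T'_def using qKT1_del[OF Q] .
    have cs': "map (\<lambda>i. if i < Suc k then cs!i - {row!i} else cs!i) [0..<length cs] = map (fil_colset T') [0..<L]"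
      unfolding lcs
    proof (rule map_cong[OF refl])
      fix i assume "i \<in> set [0..<L]"
      then have iL: "i < L" by simp
      show "(if i < Suc k then cs!i - {row!i} else cs!i) = fil_colset T' i"
        unfolding T'_def fil_colset_del[OF Q] csn[OF iL] row_def li0 by simp
    qed
    have fin: "finite {i. T i \<noteq> []}" using qKT1D(2)[OF Q] .
    have "{i. T' i \<noteq> []} = {i. T i \<noteq> []} - {i0}" unfolding T'_def by auto
    moreover have "i0 \<in> {i. T i \<noteq> []}" using li0 by auto
    ultimately have "card {i. T' i \<noteq> []} = card {i. T i \<noteq> []} - 1" using fin by (simp only: card_Diff_singleton)
    then have cn: "card {i. T' i \<noteq> []} \<le> n" using Suc.prems(3) by simp
    have lT': "\<forall>i. length (T' i) \<le> L" using Suc.prems(2) unfolding T'_def by simp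
    have IH: "psi_aux n (map (fil_colset T') [0..<L]) = Some T'" using Suc.IH[OF Q' lT' cn] .
    have hd: "hd row = i0" using qKT1D(9)[OF Q, of i0] li0 unfolding row_def by (cases "T i0") auto
    have "T'(i0 := row) = T" unfolding T'_def row_def by simp
    then show "psi_aux (Suc n) cs = Some T" using ne step cs' IH hd by simp
  qed
qed



lemma fm_ge: "x \<in> set xs \<Longrightarrow> f x \<le> foldr max (map f xs) (0::nat)"
  by (induction xs) auto

lemma fm_le: "(\<forall>x\<in>set xs. f x \<le> B) \<Longrightarrow> foldr max (map f xs) (0::nat) \<le> B"
  by (induction xs) auto

lemma filter_prefix:
  assumes "\<forall>i j. i \<le> j \<longrightarrow> j < n \<longrightarrow> P j \<longrightarrow> P i"
  shows "filter P [0..<n] = [0..<length (filter P [0..<n])]"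
  using assms
proof (induction n)
  case 0 then show ?case by simp
next
  case (Suc n)
  have IH: "filter P [0..<n] = [0..<length (filter P [0..<n])]" using Suc by simp
  show ?case
  proof (cases "P n")
    case True
    then have "\<forall>i<n. P i" using Suc.prems by (meson less_Suc_eq less_imp_le_nat)
    then have "filter P [0..<n] = [0..<n]" by (simp add: filter_id_conv)
    then show ?thesis using True by simp
  next
    case False then show ?thesis using IH by simp
  qed
qed

lemma sdec_distinct: "sorted_wrt (>) (xs::nat list) \<Longrightarrow> distinct xs"
  by (induction xs) auto

lemma dom_list:
  fixes xs ys :: "nat list"
  assumes sx: "sorted_wrt (>) xs" and sy: "sorted_wrt (>) ys"
    and d: "\<And>t. cnt (set ys) t \<le> cnt (set xs) t"
  shows "length ys \<le> length xs" "\<And>r. r < length ys \<Longrightarrow> ys!r \<le> xs!r"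
proof -
  have dx: "distinct xs" "distinct ys" using sx sy by (auto intro: sdec_distinct)
  show ll: "length ys \<le> length xs" using d[of 0] dx by (simp add: cnt0 distinct_card)
  fix r assume r: "r < length ys"
  have "set (take (Suc r) ys) \<subseteq> {y \<in> set ys. ys!r \<le> y}"
  proof
    fix y assume "y \<in> set (take (Suc r) ys)"
    then obtain j where j: "j < length (take (Suc r) ys)" "y = take (Suc r) ys ! j" by (auto simp: in_set_conv_nth)
    then have jr: "j \<le> r" "y = ys!j" by auto
    have "ys!r \<le> ys!j" using jr(1) sorted_wrt_nth_less[OF sy, of j r] r by (cases "j = r") auto
    then show "y \<in> {y \<in> set ys. ys!r \<le> y}" using jr j r by auto
  qed
  then have "card (set (take (Suc r) ys)) \<le> cnt (set ys) (ys!r)" unfolding cnt_def by (intro card_mono) auto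
  moreover have "card (set (take (Suc r) ys)) = Suc r" using dx(2) r by (simp add: distinct_card)
  ultimately have c1: "Suc r \<le> cnt (set xs) (ys!r)" using d[of "ys!r"] by simp
  show "ys!r \<le> xs!r"
  proof (rule ccontr)
    assume "\<not> ys!r \<le> xs!r"
    then have lt: "xs!r < ys!r" by simp
    have rx: "r < length xs" using r ll by simp
    have "{x \<in> set xs. ys!r \<le> x} \<subseteq> set (take r xs)"
    proof
      fix x assume "x \<in> {x \<in> set xs. ys!r \<le> x}"
      then obtain j where j: "j < length xs" "x = xs!j" "ys!r \<le> x" by (auto simp: in_set_conv_nth)
      have "j < r"
      proof (rule ccontr)
        assume "\<not> j < r"
        then have "xs!j \<le> xs!r" using sorted_wrt_nth_less[OF sx, of r j] j by (cases "j = r") auto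
        then show False using j lt by simp
      qed
      then show "x \<in> set (take r xs)" using j by (auto simp: in_set_conv_nth intro!: exI[of _ j])
    qed
    then have "cnt (set xs) (ys!r) \<le> card (set (take r xs))" unfolding cnt_def by (intro card_mono) auto
    also have "\<dots> \<le> r" using card_length[of "take r xs"] rx by simp
    finally show False using c1 by simp
  qed
qed

definition Tab :: "nat \<Rightarrow> (nat \<Rightarrow> nat list) \<Rightarrow> tableau" where
  "Tab W pc = (let H = foldr max (map (\<lambda>c. length (pc c)) [0..<W]) 0 in
     map (\<lambda>r. map (\<lambda>c. pc c ! r) (filter (\<lambda>c. r < length (pc c)) [0..<W])) [0..<H])"

lemma phi_Tab: "phi F = Tab (fil_width F) (phi_col F)"
  unfolding phi_def Tab_def Let_def ..

lemma Tab_props: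
  assumes sd: "\<And>c. sorted_wrt (>) (pc c)" and pos: "\<And>c x. x \<in> set (pc c) \<Longrightarrow> 0 < x"
    and dm: "\<And>c t. Suc c < W \<Longrightarrow> cnt (set (pc (Suc c))) t \<le> cnt (set (pc c)) t"
  shows "Tab W pc \<in> revSSYT" "\<And>c. tab_colset (Tab W pc) c = (if c < W then set (pc c) else {})"
proof -
  define len where "len c = length (pc c)" for c
  define H where "H = foldr max (map len [0..<W]) 0"
  define w where "w r = length (filter (\<lambda>c. r < len c) [0..<W])" for r
  have step: "\<And>c. Suc c < W \<Longrightarrow> len (Suc c) \<le> len c \<and> (\<forall>r<len (Suc c). pc (Suc c) ! r \<le> pc c ! r)"
    using dom_list[OF sd sd dm] unfolding len_def by blast
  have mono: "\<And>c c'. c \<le> c' \<Longrightarrow> c' < W \<Longrightarrow> len c' \<le> len c \<and> (\<forall>r<len c'. pc c' ! r \<le> pc c ! r)"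
  proof -
    fix c c' assume "c \<le> c'" "c' < W"
    then show "len c' \<le> len c \<and> (\<forall>r<len c'. pc c' ! r \<le> pc c ! r)"
    proof (induction c')
      case 0 then show ?case by simp
    next
      case (Suc c')
      show ?case
      proof (cases "c = Suc c'")
        case True then show ?thesis by simp
      next
        case False
        then have IH: "len c' \<le> len c \<and> (\<forall>r<len c'. pc c' ! r \<le> pc c ! r)" using Suc by simp
        have S: "len (Suc c') \<le> len c' \<and> (\<forall>r<len (Suc c'). pc (Suc c') ! r \<le> pc c' ! r)" using step Suc.prems by simp
        show ?thesis
        proof (intro conjI allI impI)
          show "len (Suc c') \<le> len c" using IH S by simp
          fix r assume "r < len (Suc c')"
          then show "pc (Suc c') ! r \<le> pc c ! r" using IH S by (meson le_trans less_le_trans)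
        qed
      qed
    qed
  qed
  have H0: "W > 0 \<Longrightarrow> H = len 0"
  proof -
    assume W: "W > 0"
    have "len 0 \<le> H" unfolding H_def using W by (intro fm_ge) simp
    moreover have "H \<le> len 0" unfolding H_def using mono[of 0] by (intro fm_le) auto
    ultimately show "H = len 0" by simp
  qed
  have HW: "W = 0 \<Longrightarrow> H = 0" unfolding H_def by simp
  have lenH: "\<And>c. c < W \<Longrightarrow> len c \<le> H" unfolding H_def by (intro fm_ge) simp
  have fil: "\<And>r. filter (\<lambda>c. r < len c) [0..<W] = [0..<w r]"
    unfolding w_def by (rule filter_prefix) (use mono in \<open>fastforce\<close>)
  have wiff: "\<And>r c. c < w r \<longleftrightarrow> c < W \<and> r < len c"
  proof -
    fix r c
    have "c \<in> set (filter (\<lambda>c. r < len c) [0..<W]) \<longleftrightarrow> c < w r" unfolding fil by simp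
    then show "c < w r \<longleftrightarrow> c < W \<and> r < len c" by auto
  qed
  have V: "Tab W pc = map (\<lambda>r. map (\<lambda>c. pc c ! r) [0..<w r]) [0..<H]"
    unfolding Tab_def Let_def H_def[unfolded len_def] using fil unfolding len_def by simp
  define V where "V = Tab W pc"
  have lV: "length V = H" unfolding V_def V by simp
  have lVr: "\<And>r. r < H \<Longrightarrow> length (V!r) = w r" unfolding V_def V by simp
  have Vrc: "\<And>r c. r < H \<Longrightarrow> c < w r \<Longrightarrow> V!r!c = pc c ! r" unfolding V_def V by simp
  have wmono: "\<And>i j. i \<le> j \<Longrightarrow> w j \<le> w i"
  proof (rule ccontr)
    fix i j assume ij: "i \<le> j" "\<not> w j \<le> w i"
    then have "w i < w j" by simp
    then have "w i < W \<and> j < len (w i)" using wiff by blast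
    then have "w i < w i" using wiff ij(1) by (meson le_less_trans)
    then show False by simp
  qed
  show "Tab W pc \<in> revSSYT"
    unfolding V_def[symmetric] revSSYT_def mem_Collect_eq
  proof (intro conjI allI impI ballI)
    fix row assume "row \<in> set V"
    then obtain r where r: "r < H" "row = V!r" using lV by (auto simp: in_set_conv_nth)
    have "W > 0" using r HW by (cases "W = 0") auto
    then have "0 < w r" using wiff[of 0 r] H0 r by simp
    then show "row \<noteq> []" using r lVr[OF r(1)] by auto
  next
    fix i j assume "i \<le> j \<and> j < length V"
    then show "length (V!j) \<le> length (V!i)" using lVr lV wmono by simp
  next
    fix row x assume "row \<in> set V" "x \<in> set row"
    then obtain r c where r: "r < H" "row = V!r" "c < w r" "x = V!r!c" using lV lVr by (auto simp: in_set_conv_nth)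
    then have "x = pc c ! r" "r < len c" using Vrc wiff by auto
    then show "0 < x" using pos[of x c] unfolding len_def by simp
  next
    fix row assume "row \<in> set V"
    then obtain r where r: "r < H" "row = V!r" using lV by (auto simp: in_set_conv_nth)
    show "sorted_wrt (\<ge>) row"
      unfolding sorted_wrt_iff_nth_less
    proof (intro allI impI)
      fix a b assume ab: "a < b" "b < length row"
      then have bw: "b < w r" "a < w r" using r lVr by auto
      have "pc b ! r \<le> pc a ! r" using mono[of a b] ab(1) bw wiff by auto
      then show "row!b \<le> row!a" using r Vrc bw by simp
    qed
  next
    fix i j c assume a: "i < j \<and> j < length V \<and> c < length (V!j)"
    then have cj: "c < w j" "j < H" using lVr lV by auto
    then have ci: "c < w i" using wmono[of i j] a by simp
    have jl: "j < len c" "c < W" using wiff cj by auto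
    have "pc c ! j < pc c ! i" using sorted_wrt_nth_less[OF sd, of i j c] a jl unfolding len_def by simp
    then show "V!j!c < V!i!c" using Vrc cj ci a lV by simp
  qed
  fix c
  show "tab_colset (Tab W pc) c = (if c < W then set (pc c) else {})"
  proof (cases "c < W")
    case True
    have "tab_colset V c = {pc c ! r | r. r < len c}"
      unfolding tab_colset_def lV
    proof (intro set_eqI iffI)
      fix x assume "x \<in> {V ! r ! c |r. r < H \<and> c < length (V ! r)}"
      then obtain r where "r < H" "c < w r" "x = V!r!c" using lVr by auto
      then show "x \<in> {pc c ! r | r. r < len c}" using Vrc wiff by auto
    next
      fix x assume "x \<in> {pc c ! r | r. r < len c}"
      then obtain r where r: "r < len c" "x = pc c ! r" by auto
      then have "r < H" using lenH[OF True] by simp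
      moreover have "c < w r" using wiff True r by simp
      ultimately have "x = V!r!c \<and> r < H \<and> c < length (V!r)" using Vrc[of r c] r lVr[of r] by simp
      then show "x \<in> {V ! r ! c |r. r < H \<and> c < length (V ! r)}" by blast
    qed
    also have "\<dots> = set (pc c)" unfolding len_def by (auto simp: in_set_conv_nth)
    finally show ?thesis using True unfolding V_def by simp
  next
    case False
    then have "\<And>r. \<not> c < w r" using wiff by simp
    then have "tab_colset V c = {}" unfolding tab_colset_def lV using lVr False by auto
    then show ?thesis using False unfolding V_def by simp
  qed
qed



lemma rev_unf: "V \<in> revSSYT \<longleftrightarrow> ((\<forall>row \<in> set V. row \<noteq> []) \<and>
     (\<forall>i j. i \<le> j \<and> j < length V \<longrightarrow> length (V!j) \<le> length (V!i)) \<and>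
     (\<forall>row \<in> set V. \<forall>x \<in> set row. 0 < x) \<and>
     (\<forall>row \<in> set V. sorted_wrt (\<ge>) row) \<and>
     (\<forall>i j c. i < j \<and> j < length V \<and> c < length (V!j) \<longrightarrow> V!j!c < V!i!c))"
  unfolding revSSYT_def by simp

context fixes V assumes R: "V \<in> revSSYT" begin
lemma rv1: assumes "r < length V" shows "V!r \<noteq> []"
proof -
  have H: "\<forall>row \<in> set V. row \<noteq> []" using R[unfolded rev_unf] by (elim conjE) assumption
  show ?thesis using H assms by simp
qed
lemma rv2: assumes "i \<le> j" "j < length V" shows "length (V!j) \<le> length (V!i)"
proof -
  have H: "\<forall>i j. i \<le> j \<and> j < length V \<longrightarrow> length (V!j) \<le> length (V!i)" using R[unfolded rev_unf] by (elim conjE) assumption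
  show ?thesis using H[rule_format, where i=i and j=j] assms by simp
qed
lemma rv3: assumes "r < length V" "c < length (V!r)" shows "0 < V!r!c"
proof -
  have H: "\<forall>row \<in> set V. \<forall>x \<in> set row. 0 < x" using R[unfolded rev_unf] by (elim conjE) assumption
  have "V!r \<in> set V" using assms(1) by (rule nth_mem)
  moreover have "V!r!c \<in> set (V!r)" using assms(2) by (rule nth_mem)
  ultimately show ?thesis using H by blast
qed
lemma rv4: assumes "r < length V" "c < c'" "c' < length (V!r)" shows "V!r!c' \<le> V!r!c"
proof -
  have H: "\<forall>row \<in> set V. sorted_wrt (\<ge>) row" using R[unfolded rev_unf] by (elim conjE) assumption
  then have "sorted_wrt (\<ge>) (V!r)" using assms by simp
  then show ?thesis using sorted_wrt_nth_less assms by fastforce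
qed
lemma rv5: assumes "i < j" "j < length V" "c < length (V!j)" shows "V!j!c < V!i!c"
proof -
  have H: "\<forall>i j c. i < j \<and> j < length V \<and> c < length (V!j) \<longrightarrow> V!j!c < V!i!c" using R[unfolded rev_unf] by (elim conjE) assumption
  show ?thesis using H[rule_format, where i=i and j=j and c=c] assms by simp
qed
end

definition colV :: "tableau \<Rightarrow> nat \<Rightarrow> nat list" where
  "colV V c = map (\<lambda>r. V!r!c) (filter (\<lambda>r. c < length (V!r)) [0..<length V])"

context fixes V assumes R: "V \<in> revSSYT" begin

lemma cV1: "filter (\<lambda>r. c < length (V!r)) [0..<length V] = [0..<length (colV V c)]"
proof -
  have "filter (\<lambda>r. c < length (V!r)) [0..<length V] = [0..<length (filter (\<lambda>r. c < length (V!r)) [0..<length V])]"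
    by (rule filter_prefix) (use rv2[OF R] in \<open>fastforce\<close>)
  then show ?thesis unfolding colV_def by simp
qed

lemma cV2: "r < length (colV V c) \<longleftrightarrow> r < length V \<and> c < length (V!r)"
proof -
  have "r \<in> set (filter (\<lambda>r. c < length (V!r)) [0..<length V]) \<longleftrightarrow> r < length (colV V c)"
    unfolding cV1 by simp
  then show ?thesis by auto
qed

lemma cV3: assumes r: "r < length (colV V c)" shows "colV V c ! r = V!r!c"
proof -
  have e: "filter (\<lambda>r. c < length (V!r)) [0..<length V] ! r = r" unfolding cV1 using r by simp
  have "r < length (filter (\<lambda>r. c < length (V!r)) [0..<length V])" using r unfolding colV_def by simp
  then show ?thesis unfolding colV_def using e by simp
qed

lemma cV4: "sorted_wrt (>) (colV V c)"
  unfolding sorted_wrt_iff_nth_less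
proof (intro allI impI)
  fix i j assume ij: "i < j" "j < length (colV V c)"
  then have i: "i < length (colV V c)" by simp
  have "j < length V" "c < length (V!j)" using cV2 ij(2) by auto
  then have "V!j!c < V!i!c" using rv5[OF R ij(1)] by simp
  then show "colV V c ! j < colV V c ! i" using cV3[OF i] cV3[OF ij(2)] by simp
qed

lemma cV5: "set (colV V c) = tab_colset V c"
proof (intro set_eqI iffI)
  fix x assume "x \<in> set (colV V c)"
  then obtain r where "r < length (colV V c)" "x = colV V c ! r" by (auto simp: in_set_conv_nth)
  then show "x \<in> tab_colset V c" unfolding tab_colset_def using cV2 cV3 by auto
next
  fix x assume "x \<in> tab_colset V c"
  then obtain r where r: "r < length V" "c < length (V!r)" "x = V!r!c" unfolding tab_colset_def by auto
  then have "r < length (colV V c)" using cV2 by simp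
  then show "x \<in> set (colV V c)" using cV3 r by (metis nth_mem)
qed

lemma tab_width_ge: "r < length V \<Longrightarrow> length (V!r) \<le> tab_width V"
  unfolding tab_width_def by (intro fm_ge) simp

lemma tab_colset_beyond: "tab_width V \<le> c \<Longrightarrow> tab_colset V c = {}"
  unfolding tab_colset_def using tab_width_ge by fastforce

lemma tab_colset_fin: "finite (tab_colset V c)"
proof -
  have "tab_colset V c \<subseteq> (\<lambda>r. V!r!c) ` {..<length V}" unfolding tab_colset_def by auto
  then show ?thesis by (rule finite_subset) simp
qed

end

lemma sdec_unique:
  fixes xs ys :: "nat list"
  assumes "sorted_wrt (>) xs" "sorted_wrt (>) ys" "set xs = set ys" shows "xs = ys"
proof -
  have "sorted_wrt (<) (rev xs)" "sorted_wrt (<) (rev ys)" using assms by (simp_all add: sorted_wrt_rev)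
  then have "rev xs = rev ys" using assms(3) sorted_distinct_set_unique[of "rev xs" "rev ys"] unfolding strict_sorted_iff by simp
  then show ?thesis by simp
qed

lemma revU:
  assumes R: "V \<in> revSSYT" and R': "V' \<in> revSSYT" and E: "\<And>c. tab_colset V c = tab_colset V' c"
  shows "V = V'"
proof -
  have C: "\<And>c. colV V c = colV V' c"
    using sdec_unique[OF cV4[OF R] cV4[OF R']] cV5[OF R] cV5[OF R'] E by simp
  have l: "\<And>W. W \<in> revSSYT \<Longrightarrow> length (colV W 0) = length W"
  proof -
    fix W assume W: "W \<in> revSSYT"
    have "\<And>r. r < length (colV W 0) \<longleftrightarrow> r < length W" using cV2[OF W] rv1[OF W] by auto
    then show "length (colV W 0) = length W" by (metis nat_neq_iff)
  qed
  have len: "length V = length V'" using l[OF R] l[OF R'] C[of 0] by simp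
  show ?thesis
  proof (rule nth_equalityI[OF len])
    fix r assume r: "r < length V"
    have "\<And>c. c < length (V!r) \<longleftrightarrow> c < length (V'!r)" using cV2[OF R] cV2[OF R'] C r len by metis
    then have lr: "length (V!r) = length (V'!r)" by (metis nat_neq_iff)
    show "V!r = V'!r"
    proof (rule nth_equalityI[OF lr])
      fix c assume c: "c < length (V!r)"
      have "r < length (colV V c)" using cV2[OF R] r c by simp
      then show "V!r!c = V'!r!c" using cV3[OF R] cV3[OF R'] C by metis
    qed
  qed
qed

lemma inj_count:
  assumes "finite B" "A = f ` S" "inj_on f S" "inj_on g S" "g ` S \<subseteq> B"
  shows "card A \<le> card B"
proof -
  have "card A = card S" using assms(2,3) by (simp add: card_image)
  also have "\<dots> = card (g ` S)" using assms(4) by (simp add: card_image)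
  also have "\<dots> \<le> card B" using assms(1,5) by (rule card_mono)
  finally show ?thesis .
qed

lemma good_tab: assumes R: "V \<in> revSSYT" shows "good (tab_colsets V)"
  unfolding good_def
proof (intro conjI ballI allI impI)
  fix C assume "C \<in> set (tab_colsets V)"
  then obtain c where C: "C = tab_colset V c" unfolding tab_colsets_def by auto
  show "finite C" using tab_colset_fin[OF R] C by simp
  fix x assume "x \<in> C"
  then show "0 < x" using C rv3[OF R] unfolding tab_colset_def by auto
next
  fix c t assume "Suc c < length (tab_colsets V)"
  then have c: "Suc c < tab_width V" unfolding tab_colsets_def by simp
  define S where "S = {r. r < length V \<and> Suc c < length (V!r) \<and> t \<le> V!r!Suc c}"
  have "card {x \<in> tab_colset V (Suc c). t \<le> x} \<le> card {x \<in> tab_colset V c. t \<le> x}"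
  proof (rule inj_count[where f="\<lambda>r. V!r!Suc c" and g="\<lambda>r. V!r!c" and S=S])
    show "finite {x \<in> tab_colset V c. t \<le> x}" using tab_colset_fin[OF R] by simp
    show "{x \<in> tab_colset V (Suc c). t \<le> x} = (\<lambda>r. V ! r ! Suc c) ` S"
    proof (intro set_eqI iffI)
      fix x assume "x \<in> {x \<in> tab_colset V (Suc c). t \<le> x}"
      then obtain r where r: "x = V!r!Suc c" "r < length V" "Suc c < length (V!r)" "t \<le> x"
        unfolding tab_colset_def by blast
      then have "r \<in> S" unfolding S_def by simp
      then show "x \<in> (\<lambda>r. V ! r ! Suc c) ` S" using r(1) by (rule rev_image_eqI)
    next
      fix x assume "x \<in> (\<lambda>r. V ! r ! Suc c) ` S"
      then obtain r where r: "r \<in> S" "x = V!r!Suc c" by blast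
      then show "x \<in> {x \<in> tab_colset V (Suc c). t \<le> x}" unfolding S_def tab_colset_def by blast
    qed
    show "inj_on (\<lambda>r. V ! r ! Suc c) S"
    proof (rule inj_onI)
      fix a b assume ab: "a \<in> S" "b \<in> S" "V!a!Suc c = V!b!Suc c"
      show "a = b"
      proof (rule ccontr)
        assume "a \<noteq> b"
        then consider "a < b" | "b < a" by linarith
        then show False
        proof cases
          case 1 then show False using rv5[OF R 1, of "Suc c"] ab unfolding S_def by simp
        next
          case 2 then show False using rv5[OF R 2, of "Suc c"] ab unfolding S_def by simp
        qed
      qed
    qed
    show "inj_on (\<lambda>r. V ! r ! c) S"
    proof (rule inj_onI)
      fix a b assume ab: "a \<in> S" "b \<in> S" "V!a!c = V!b!c"
      show "a = b"
      proof (rule ccontr)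
        assume "a \<noteq> b"
        then consider "a < b" | "b < a" by linarith
        then show False
        proof cases
          case 1 then show False using rv5[OF R 1, of c] ab unfolding S_def by simp
        next
          case 2 then show False using rv5[OF R 2, of c] ab unfolding S_def by simp
        qed
      qed
    qed
    show "(\<lambda>r. V ! r ! c) ` S \<subseteq> {x \<in> tab_colset V c. t \<le> x}"
    proof
      fix x assume "x \<in> (\<lambda>r. V ! r ! c) ` S"
      then obtain r where r: "r \<in> S" "x = V!r!c" by auto
      then have "V!r!Suc c \<le> V!r!c" using rv4[OF R, of r c "Suc c"] unfolding S_def by simp
      moreover have "r < length V" "c < length (V!r)" "t \<le> V!r!Suc c" using r unfolding S_def by auto
      ultimately show "x \<in> {x \<in> tab_colset V c. t \<le> x}" using r(2) unfolding tab_colset_def by auto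
    qed
  qed
  then show "cnt (tab_colsets V ! Suc c) t \<le> cnt (tab_colsets V ! c) t"
    unfolding cnt_def tab_colsets_def using c by simp
qed

lemma len_sum: "(\<forall>x\<in>set V. x \<noteq> []) \<Longrightarrow> length V \<le> sum_list (map length V)"
proof (induction V)
  case Nil then show ?case by simp
next
  case (Cons a V) then show ?case by (cases a) auto
qed

lemma card_col0: assumes R: "V \<in> revSSYT" shows "card (tab_colset V 0) \<le> sum_list (map length V)"
proof -
  have "tab_colset V 0 \<subseteq> (\<lambda>r. V!r!0) ` {..<length V}" unfolding tab_colset_def by auto
  then have "card (tab_colset V 0) \<le> card ((\<lambda>r. V!r!0) ` {..<length V})" by (intro card_mono) auto
  also have "\<dots> \<le> length V" using card_image_le[of "{..<length V}" "\<lambda>r. V!r!0"] by simp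
  also have "\<dots> \<le> sum_list (map length V)"
  proof (rule len_sum, rule ballI)
    fix x assume "x \<in> set V"
    then obtain r where "r < length V" "x = V!r" by (auto simp: in_set_conv_nth)
    then show "x \<noteq> []" using rv1[OF R] by simp
  qed
  finally show ?thesis .
qed



context fixes T assumes Q: "T \<in> qKT1" begin

lemma fh: assumes "T i \<noteq> []" shows "i < fil_height T"
proof -
  obtain N where N: "\<forall>i\<in>{i. T i \<noteq> []}. i < N" using qKT1D(2)[OF Q] finite_nat_set_iff_bounded by blast
  then have ex: "\<exists>N. \<forall>i\<ge>N. T i = []" by (metis leD mem_Collect_eq)
  have "\<forall>i\<ge>fil_height T. T i = []" unfolding fil_height_def using LeastI_ex[OF ex] .
  then show ?thesis using assms by (meson not_le)
qed

lemma fw: "length (T i) \<le> fil_width T"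
proof (cases "T i = []")
  case False
  then have "i \<in> set [0..<fil_height T]" using fh by simp
  then show ?thesis unfolding fil_width_def by (rule fm_ge)
qed simp

lemma fin_col: "finite (fil_colset T c)"
proof -
  have "fil_colset T c \<subseteq> (\<lambda>i. T i!c) ` {i. T i \<noteq> []}" unfolding fil_colset_def by auto
  then show ?thesis using qKT1D(2)[OF Q] by (meson finite_imageI finite_subset)
qed

lemma fcol_set: "set (fil_col T c) = fil_colset T c"
proof (intro set_eqI iffI)
  fix x assume "x \<in> set (fil_col T c)"
  then show "x \<in> fil_colset T c" unfolding fil_col_def fil_colset_def by auto
next
  fix x assume "x \<in> fil_colset T c"
  then obtain i where i: "x = T i ! c" "c < length (T i)" unfolding fil_colset_def by blast
  then have "i < fil_height T" using fh by (metis length_0_conv not_less0)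
  then have "i \<in> set (filter (\<lambda>i. c < length (T i)) [0..<fil_height T])" using i by simp
  then show "x \<in> set (fil_col T c)" unfolding fil_col_def using i(1) by simp
qed

lemma fcol_dist: "distinct (fil_col T c)"
  unfolding fil_col_def distinct_map
proof
  show "distinct (filter (\<lambda>i. c < length (T i)) [0..<fil_height T])" by simp
  show "inj_on (\<lambda>i. T i ! c) (set (filter (\<lambda>i. c < length (T i)) [0..<fil_height T]))"
  proof (rule inj_onI)
    fix a b assume "a \<in> set (filter (\<lambda>i. c < length (T i)) [0..<fil_height T])"
      "b \<in> set (filter (\<lambda>i. c < length (T i)) [0..<fil_height T])" "T a ! c = T b ! c"
    then show "a = b" using qKT1D(6)[OF Q, of a b c] by auto
  qed
qed

lemma pcol_sd: "sorted_wrt (>) (phi_col T c)"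
proof -
  have "sorted_wrt (<) (sort (fil_col T c))" unfolding strict_sorted_iff using fcol_dist by simp
  then show ?thesis unfolding phi_col_def by (simp add: sorted_wrt_rev)
qed

lemma pcol_set: "set (phi_col T c) = fil_colset T c"
  unfolding phi_col_def using fcol_set by simp

lemma fil_dom: "cnt (fil_colset T (Suc c)) t \<le> cnt (fil_colset T c) t"
proof -
  define S where "S = {i. Suc c < length (T i) \<and> t \<le> T i!Suc c}"
  have "card {x \<in> fil_colset T (Suc c). t \<le> x} \<le> card {x \<in> fil_colset T c. t \<le> x}"
  proof (rule inj_count[where f="\<lambda>r. T r!Suc c" and g="\<lambda>r. T r!c" and S=S])
    show "finite {x \<in> fil_colset T c. t \<le> x}" using fin_col by simp
    show "{x \<in> fil_colset T (Suc c). t \<le> x} = (\<lambda>r. T r ! Suc c) ` S"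
    proof (intro set_eqI iffI)
      fix x assume "x \<in> {x \<in> fil_colset T (Suc c). t \<le> x}"
      then obtain r where r: "x = T r!Suc c" "Suc c < length (T r)" "t \<le> x"
        unfolding fil_colset_def by blast
      then have "r \<in> S" unfolding S_def by simp
      then show "x \<in> (\<lambda>r. T r ! Suc c) ` S" using r(1) by (rule rev_image_eqI)
    next
      fix x assume "x \<in> (\<lambda>r. T r ! Suc c) ` S"
      then obtain r where r: "r \<in> S" "x = T r!Suc c" by blast
      then show "x \<in> {x \<in> fil_colset T (Suc c). t \<le> x}" unfolding S_def fil_colset_def by blast
    qed
    show "inj_on (\<lambda>r. T r ! Suc c) S"
      by (rule inj_onI) (use qKT1D(6)[OF Q] in \<open>unfold S_def, blast\<close>)
    show "inj_on (\<lambda>r. T r ! c) S"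
    proof (rule inj_onI)
      fix a b assume ab: "a \<in> S" "b \<in> S" "T a ! c = T b ! c"
      then have "c < length (T a)" "c < length (T b)" unfolding S_def by auto
      then show "a = b" using qKT1D(6)[OF Q, of a b c] ab(3) by blast
    qed
    show "(\<lambda>r. T r ! c) ` S \<subseteq> {x \<in> fil_colset T c. t \<le> x}"
    proof
      fix x assume "x \<in> (\<lambda>r. T r ! c) ` S"
      then obtain r where r: "r \<in> S" "x = T r!c" by auto
      then have sc: "Suc c < length (T r)" "t \<le> T r!Suc c" unfolding S_def by auto
      have "T r!Suc c \<le> T r!c" using qKT1D(4)[OF Q, of r] sorted_wrt_nth_less sc(1) by fastforce
      then show "x \<in> {x \<in> fil_colset T c. t \<le> x}" using r(2) sc unfolding fil_colset_def by auto
    qed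
  qed
  then show ?thesis unfolding cnt_def .
qed

lemma beyond: "fil_width T \<le> c \<Longrightarrow> fil_colset T c = {}"
proof -
  assume a: "fil_width T \<le> c"
  have "\<And>i. \<not> c < length (T i)" using fw a by (meson leD le_trans)
  then show ?thesis unfolding fil_colset_def by simp
qed

lemma phiT: "phi T \<in> revSSYT" "\<And>c. tab_colset (phi T) c = fil_colset T c"
proof -
  have sd: "\<And>c. sorted_wrt (>) (phi_col T c)" by (rule pcol_sd)
  have pos: "\<And>c x. x \<in> set (phi_col T c) \<Longrightarrow> 0 < x"
    unfolding pcol_set fil_colset_def using qKT1D(3)[OF Q] nth_mem by blast
  have dm: "\<And>c t. Suc c < fil_width T \<Longrightarrow> cnt (set (phi_col T (Suc c))) t \<le> cnt (set (phi_col T c)) t"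
    unfolding pcol_set by (rule fil_dom)
  note TP = Tab_props[where pc="phi_col T" and W="fil_width T", OF sd pos dm]
  show "phi T \<in> revSSYT" unfolding phi_Tab by (rule TP(1))
  fix c show "tab_colset (phi T) c = fil_colset T c"
    unfolding phi_Tab using TP(2)[where c=c] pcol_set[where c=c] beyond[where c=c] by (cases "c < fil_width T") auto
qed

lemma col0: "fil_colset T 0 = {i. T i \<noteq> []}"
  unfolding fil_colset_def using qKT1D(9)[OF Q] by force

end

lemma forV:
  assumes R: "V \<in> revSSYT"
  shows "\<exists>T. psi V = Some T \<and> T \<in> qKT1 \<and> (\<forall>c. fil_colset T c = tab_colset V c) \<and> phi T = V"
proof -
  define cs where "cs = tab_colsets V"
  define n where "n = sum_list (map length V)"
  have gd: "good cs" unfolding cs_def using good_tab[OF R] .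
  have lcs: "length cs = tab_width V" unfolding cs_def tab_colsets_def by simp
  have csn: "\<And>c. c < tab_width V \<Longrightarrow> cs!c = tab_colset V c" unfolding cs_def tab_colsets_def by simp
  have "cs \<noteq> [] \<Longrightarrow> card (cs!0) \<le> n"
  proof -
    assume "cs \<noteq> []"
    then have "0 < tab_width V" using lcs by (metis length_greater_0_conv)
    then show "card (cs!0) \<le> n" using csn card_col0[OF R] unfolding n_def by simp
  qed
  from lemB[OF gd this] obtain T where T: "psi_aux n cs = Some T" "T \<in> qKT1"
    "\<forall>c<length cs. fil_colset T c = cs!c" "\<forall>i. length (T i) \<le> length cs" by blast
  have ps: "psi V = Some T" using T(1) unfolding psi_def cs_def n_def .
  have cols: "\<forall>c. fil_colset T c = tab_colset V c"
  proof
    fix c show "fil_colset T c = tab_colset V c"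
    proof (cases "c < tab_width V")
      case True then show ?thesis using T(3) lcs csn by simp
    next
      case False
      have "\<And>i. \<not> c < length (T i)"
      proof -
        fix i show "\<not> c < length (T i)" using T(4)[rule_format, of i] lcs False by simp
      qed
      then have "fil_colset T c = {}" using colset_ne[of T c] by simp
      then show ?thesis using tab_colset_beyond[OF R] False by simp
    qed
  qed
  have E: "\<And>c. tab_colset (phi T) c = tab_colset V c" using phiT(2)[OF T(2)] cols by simp
  have "phi T = V" by (rule revU[OF phiT(1)[OF T(2)] R E])
  then show ?thesis using ps T(2) cols by blast
qed

lemma forT:
  assumes Q: "T \<in> qKT1"
  shows "psi (phi T) = Some T"
proof -
  define V where "V = phi T"
  have R: "V \<in> revSSYT" unfolding V_def by (rule phiT(1)[OF Q])
  have C: "\<And>c. tab_colset V c = fil_colset T c" unfolding V_def by (rule phiT(2)[OF Q])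
  have cs: "tab_colsets V = map (fil_colset T) [0..<tab_width V]" unfolding tab_colsets_def using C by simp
  have len: "\<forall>i. length (T i) \<le> tab_width V"
  proof (rule ccontr)
    assume "\<not> (\<forall>i. length (T i) \<le> tab_width V)"
    then obtain i where "tab_width V < length (T i)" by (auto simp: not_le)
    then have "fil_colset T (tab_width V) \<noteq> {}" using colset_ne by blast
    then show False using C tab_colset_beyond[OF R] by simp
  qed
  have "card {i. T i \<noteq> []} \<le> sum_list (map length V)"
    using card_col0[OF R] C[of 0] col0[OF Q] by simp
  then have "psi_aux (sum_list (map length V)) (map (fil_colset T) [0..<tab_width V]) = Some T"
    using lemA[OF Q len] by simp
  then show ?thesis unfolding V_def[symmetric] psi_def cs .
qed

theorem theorem5p8:
  shows "(\<forall>V \<in> revSSYT. \<exists>T. psi V = Some T \<and> T \<in> qKT1)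
    \<and> bij_betw (\<lambda>V. the (psi V)) revSSYT qKT1
    \<and> (\<forall>V \<in> revSSYT. phi (the (psi V)) = V)
    \<and> (\<forall>T \<in> qKT1. phi T \<in> revSSYT \<and> the (psi (phi T)) = T)
    \<and> (\<forall>V \<in> revSSYT. \<forall>c. fil_colset (the (psi V)) c = tab_colset V c)
    \<and> (\<forall>T \<in> qKT1. \<forall>c. tab_colset (phi T) c = fil_colset T c)"
proof -
  have A: "\<forall>V \<in> revSSYT. \<exists>T. psi V = Some T \<and> T \<in> qKT1" using forV by blast
  have B: "\<forall>V \<in> revSSYT. phi (the (psi V)) = V" using forV by fastforce
  have C: "\<forall>T \<in> qKT1. phi T \<in> revSSYT \<and> the (psi (phi T)) = T" using phiT(1) forT by simp
  have D: "\<forall>V \<in> revSSYT. \<forall>c. fil_colset (the (psi V)) c = tab_colset V c" using forV by fastforce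
  have E: "\<forall>T \<in> qKT1. \<forall>c. tab_colset (phi T) c = fil_colset T c" using phiT(2) by blast
  have F: "bij_betw (\<lambda>V. the (psi V)) revSSYT qKT1"
  proof (rule bij_betw_byWitness[where f'=phi])
    show "\<forall>a\<in>revSSYT. phi (the (psi a)) = a" using B .
    show "\<forall>a'\<in>qKT1. the (psi (phi a')) = a'" using C by blast
    show "(\<lambda>V. the (psi V)) ` revSSYT \<subseteq> qKT1" using A by force
    show "phi ` qKT1 \<subseteq> revSSYT" using C by blast
  qed
  show ?thesis by (intro conjI) (fact A, fact F, fact B, fact C, fact D, fact E)
qed


end
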